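(* We may fix a basis for the matrices in $\mathcal{M}_k^j(\rho^2)$ such that $G=\Omega_j\,\mathrm{diag}\{x_1,\dots,x_k\}$, where $x_r$, $r=1,\dots,k$, are $k$-th roots of unity.
   Context: Non-singular monad matrices are $(A,B,C,D)$ with $A\in GL(k,\mathbb{C})$, $B\in Mat_{k\times k}(\mathbb{C})$, $C\in Mat_{k\times 2}(\mathbb{C})$, $D\in Mat_{2\times k}(\mathbb{C})$, satisfying $[A,B]+CD=0$ and the full-rank conditions ($\begin{pmatrix}A-y\mathbb{1}_k\\ B-x\mathbb{1}_k\\ D\end{pmatrix}$ injective and $\begin{pmatrix}x\mathbb{1}_k-B & A-y\mathbb{1}_k & C\end{pmatrix}$ surjective for all $x,y\in\mathbb{C}$), considered up to $(A,B,C,D)\sim(hAh^{-1},hBh^{-1},hC,Dh^{-1})$, $h\in GL(k,\mathbb{C})$. Here $j\in\mathbb{Z}_{2k}$ is even, and $\mathcal{M}_k^j(\rho^2)$ is the set of such matrices for which there is $G\in GL(k,\mathbb{C})$ with $e^{\imath\frac{2j\pi}{k}}A=GAG^{-1}$, $e^{\imath\frac{2\pi}{k}}B=GBG^{-1}$, $e^{\imath\frac{\pi}{k}}C=GC\,\mathrm{adj}(\sigma_{2j\pi/k})$, $e^{\imath\frac{\pi}{k}}D=\sigma_{2j\pi/k}DG^{-1}$, where $\sigma_\varphi=\mathrm{diag}(e^{-\imath\frac{3\varphi}{4}},e^{-\imath\frac{\varphi}{4}})$ and $\mathrm{adj}(\sigma)=\det(\sigma)\sigma^{-1}$. $\Omega_j=e^{\imath\frac{(2-j)\pi}{2k}}$.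 *)

theory Defs
  imports "HOL-Analysis.Analysis"
begin

text \<open>Scalar multiple of a matrix (as the matrix product with a scalar matrix).\<close>
definition cscal :: "complex \<Rightarrow> complex^'n^'m \<Rightarrow> complex^'n^'m" where
  "cscal c M = (\<chi> i j. c * M $ i $ j)"

text \<open>sigma_phi = diag(exp(-i 3 phi/4), exp(-i phi/4))\<close>
definition sigma :: "real \<Rightarrow> complex^2^2" where
  "sigma \<phi> = (\<chi> a b. if a = b then
       (if a = 1 then exp (- \<i> * of_real (3 * \<phi> / 4)) else exp (- \<i> * of_real (\<phi> / 4)))
     else 0)"

text \<open>adj(s) = det(s) s^{-1}\<close>
definition adjm :: "complex^2^2 \<Rightarrow> complex^2^2" where
  "adjm s = cscal (det s) (matrix_inv s)"

text \<open>Non-singular monad matrices (A,B,C,D), with k = CARD('k).\<close>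
definition nonsingular_monad ::
  "complex^'k^'k \<Rightarrow> complex^'k^'k \<Rightarrow> complex^2^'k \<Rightarrow> complex^'k^2 \<Rightarrow> bool" where
  "nonsingular_monad A B C D \<longleftrightarrow>
     invertible A \<and>
     A ** B - B ** A + C ** D = 0 \<and>
     (\<forall>x y :: complex.
        inj (\<lambda>v :: complex^'k. ((A - mat y) *v v, (B - mat x) *v v, D *v v)) \<and>
        (\<forall>z :: complex^'k. \<exists>u v :: complex^'k. \<exists>w :: complex^2.
            (mat x - B) *v u + (A - mat y) *v v + C *v w = z))"

text \<open>G realises the Z_{2k}-symmetry rho^2 with parameter j on (A,B,C,D).\<close>
definition symm_witness ::
  "int \<Rightarrow> complex^'k^'k \<Rightarrow> complex^'k^'k \<Rightarrow> complex^'k^'k \<Rightarrow> complex^2^'k \<Rightarrow> complex^'k^2 \<Rightarrow> bool" where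
  "symm_witness j G A B C D \<longleftrightarrow>
     (let k = real CARD('k); \<phi> = 2 * real_of_int j * pi / k in
     invertible G \<and>
     cscal (exp (\<i> * of_real (2 * real_of_int j * pi / k))) A = G ** A ** matrix_inv G \<and>
     cscal (exp (\<i> * of_real (2 * pi / k))) B = G ** B ** matrix_inv G \<and>
     cscal (exp (\<i> * of_real (pi / k))) C = G ** C ** adjm (sigma \<phi>) \<and>
     cscal (exp (\<i> * of_real (pi / k))) D = sigma \<phi> ** D ** matrix_inv G)"

definition Omega :: "int \<Rightarrow> nat \<Rightarrow> complex" where
  "Omega j k = exp (\<i> * of_real ((2 - real_of_int j) * pi / (2 * real k)))"

end

theory Submission
  imports Defs "HOL-Computational_Algebra.Fundamental_Theorem_Algebra" "HOL-Library.Cardinality"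
begin


definition pev :: "complex poly \<Rightarrow> complex^'k^'k \<Rightarrow> complex^'k \<Rightarrow> complex^'k" where
  "pev p M v = fold_coeffs (\<lambda>a F u. a *s u + M *v F u) p (\<lambda>u. 0) v"

lemma mv_scale: "(M::complex^'n^'m) *v (c *s v) = c *s (M *v v)"
  by (simp add: vec_eq_iff matrix_vector_mult_def sum_distrib_left mult_ac)

lemma mv_add: "(M::complex^'n^'m) *v (u + v) = M *v u + M *v v"
  by (simp add: matrix_vector_right_distrib)

lemma mv_diff: "(M::complex^'n^'m) *v (u - v) = M *v u - M *v v"
  by (simp add: vec_eq_iff matrix_vector_mult_def sum_subtractf right_diff_distrib)

lemma mat_mv: "mat y *v (v::complex^'n) = y *s v"
proof -
  have "(\<Sum>j\<in>UNIV. (if i = j then y else 0) * v $ j) = y * v $ i" for i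
    by (simp add: if_distrib[of "\<lambda>x. x * v $ _"] cong: if_cong)
  then show ?thesis by (simp add: vec_eq_iff matrix_vector_mult_def mat_def)
qed

lemma pev_0[simp]: "pev 0 M v = 0"
  by (simp add: pev_def)

lemma pev_pCons: "pev (pCons a p) M v = a *s v + M *v pev p M v"
proof (cases "p = 0 \<and> a = 0")
  case True then show ?thesis by (simp add: pev_def)
next
  case False
  then have "fold_coeffs (\<lambda>a F u. a *s u + M *v F u) (pCons a p) = (\<lambda>a F u. a *s u + M *v F u) a \<circ> fold_coeffs (\<lambda>a F u. a *s u + M *v F u) p"
    by auto
  then show ?thesis by (simp add: pev_def)
qed

lemma pev_add: "pev (p + q) M v = pev p M v + pev q M v"
proof (induction p q rule: poly_induct2)
  case 0 then show ?case by simp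
next
  case (pCons a p b q)
  then show ?case by (simp add: pev_pCons mv_add vec.scale_left_distrib algebra_simps)
qed

lemma pev_smult: "pev (smult c p) M v = c *s pev p M v"
  by (induction p) (simp_all add: pev_pCons mv_scale vec.scale_right_distrib)

lemma pev_vadd: "pev p M (u + w) = pev p M u + pev p M w"
  by (induction p) (simp_all add: pev_pCons mv_add vec.scale_right_distrib algebra_simps)

lemma pev_vscale: "pev p M (c *s u) = c *s pev p M u"
  by (induction p) (simp_all add: pev_pCons mv_scale vec.scale_right_distrib)

lemma pev_mult: "pev (p * q) M v = pev p M (pev q M v)"
  by (induction p) (simp_all add: pev_pCons pev_add pev_smult)

lemma pev_sum: "pev (\<Sum>i\<in>I. f i) M v = (\<Sum>i\<in>I. pev (f i) M v)"
  by (induction I rule: infinite_finite_induct) (simp_all add: pev_add)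

lemma pev_const: "pev [:a:] M v = a *s v"
  by (simp add: pev_pCons)

lemma pev_one: "pev 1 M v = v"
  by (simp add: one_pCons pev_pCons)

lemma pev_lin: "pev [:-a, 1:] M v = M *v v - a *s v"
  by (simp add: pev_pCons)

lemma pev_monom: "pev (monom 1 n) M v = (((*v) M) ^^ n) v"
  by (induction n) (simp_all add: monom_0 pev_const monom_Suc pev_pCons)

lemma pev_in:
  assumes S: "vec.subspace S" and inv: "\<forall>v\<in>S. M *v v \<in> S" and w: "w \<in> S"
  shows "pev p M w \<in> S"
  by (induction p) (simp_all add: pev_pCons vec.subspace_0[OF S] vec.subspace_add[OF S]
        vec.subspace_scale[OF S] w inv)

lemma eig_aux:
  assumes S: "vec.subspace S" and inv: "\<forall>v\<in>S. M *v v \<in> S"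
  shows "degree p = n \<Longrightarrow> p \<noteq> 0 \<Longrightarrow> w \<in> S \<Longrightarrow> w \<noteq> 0 \<Longrightarrow> pev p M w = 0 \<Longrightarrow>
    \<exists>u\<in>S. u \<noteq> 0 \<and> (\<exists>y. M *v u = y *s u)"
proof (induction n arbitrary: p w)
  case 0
  then have "p = [:coeff p 0:]" using degree_0_id by metis
  then have "pev p M w = coeff p 0 *s w" by (metis pev_const)
  moreover have "coeff p 0 \<noteq> 0" using 0 \<open>p = [:coeff p 0:]\<close> by (metis pCons_0_0)
  ultimately show ?case using 0 by simp
next
  case (Suc n)
  then have "\<not> constant (poly p)" by (simp add: constant_degree)
  then obtain z where "poly p z = 0" using fundamental_theorem_of_algebra by blast
  then obtain q where pq: "p = [:-z, 1:] * q" using poly_eq_0_iff_dvd by (metis dvdE)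
  have q0: "q \<noteq> 0" using Suc.prems pq by auto
  have "degree ([:-z, 1:] * q) = degree [:-z, 1:] + degree q" by (rule degree_mult_eq) (use q0 in auto)
  then have "degree p = 1 + degree q" using pq by simp
  then have dq: "degree q = n" using Suc.prems by simp
  define u where "u = pev q M w"
  have uS: "u \<in> S" unfolding u_def by (rule pev_in[OF S inv Suc.prems(3)])
  have "pev p M w = pev [:-z, 1:] M u" by (simp only: pq pev_mult u_def)
  then have "M *v u - z *s u = 0" using Suc.prems by (simp only: pev_lin)
  then have eig: "M *v u = z *s u" by simp
  show ?case
  proof (cases "u = 0")
    case True
    then show ?thesis using Suc.IH[OF dq q0 Suc.prems(3,4)] u_def by simp
  next
    case False
    then show ?thesis using uS eig by blast
  qed
qed

lemma annih:
  fixes M :: "complex^'k^'k" and w :: "complex^'k"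
  shows "\<exists>p. p \<noteq> 0 \<and> pev p M w = 0"
proof -
  obtain e :: "'k option \<Rightarrow> nat" where e: "inj e"
    using finite_imp_inj_to_nat_seg[of "UNIV :: 'k option set"] by blast
  define W :: "complex^('k option)^'k" where "W = (\<chi> i t. ((((*v) M) ^^ e t) w) $ i)"
  have col: "column t W = (((*v) M) ^^ e t) w" for t
    by (simp add: W_def column_def vec_eq_iff)
  have "\<not> (\<exists>(B :: complex^'k^('k option)). B ** W = mat 1)"
  proof
    assume "\<exists>(B :: complex^'k^('k option)). B ** W = mat 1"
    then obtain B :: "complex^'k^('k option)" where BW: "B ** W = mat 1" by blast
    have "range ((*v) B) = UNIV"
      by (metis BW matrix_vector_mul_assoc matrix_vector_mul_lid surj_def)
    then have "vec.dim (UNIV :: (complex^('k option)) set) \<le> vec.dim (UNIV :: (complex^'k) set)"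
      using vec.dim_image_le[OF matrix_vector_mul_linear_gen, of B UNIV] by simp
    then have "CARD('k option) \<le> CARD('k)" by (simp only: vec_dim_card)
    then show False by simp
  qed
  then obtain c where c: "(\<Sum>t\<in>UNIV. c t *s column t W) = 0" and "\<exists>t. c t \<noteq> 0"
    using matrix_left_invertible_independent_columns[of W] by blast
  then obtain o0 where o0: "c o0 \<noteq> 0" by blast
  define p where "p = (\<Sum>t\<in>UNIV. monom (c t) (e t))"
  have "coeff p (e o0) = (\<Sum>t\<in>UNIV. if t = o0 then c t else 0)"
    unfolding p_def coeff_sum coeff_monom
    by (intro sum.cong refl) (use e in \<open>auto simp: inj_eq\<close>)
  then have "coeff p (e o0) = c o0" by simp
  then have "p \<noteq> 0" using o0 by auto
  moreover have "pev p M w = 0"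
  proof -
    have "pev p M w = (\<Sum>t\<in>UNIV. c t *s (((*v) M) ^^ e t) w)"
      unfolding p_def pev_sum
      by (intro sum.cong refl) (metis mult.right_neutral pev_monom pev_smult smult_monom)
    then show ?thesis using c col by simp
  qed
  ultimately show ?thesis by blast
qed

lemma eig_in_subspace:
  fixes M :: "complex^'k^'k"
  assumes S: "vec.subspace S" and inv: "\<forall>v\<in>S. M *v v \<in> S" and ne: "S \<noteq> {0}"
  shows "\<exists>u\<in>S. u \<noteq> 0 \<and> (\<exists>y. M *v u = y *s u)"
proof -
  obtain w where w: "w \<in> S" "w \<noteq> 0" using ne vec.subspace_0[OF S] by blast
  obtain p where "p \<noteq> 0" "pev p M w = 0" using annih by blast
  then show ?thesis using eig_aux[OF S inv refl _ w] by blast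
qed



lemma diag_from_pow:
  fixes G :: "complex^'k^'k"
  assumes c0: "c \<noteq> 0" and H: "\<forall>v. (((*v) G) ^^ CARD('k)) v = c *s v"
  shows "\<exists>(P::complex^'k^'k) (lam::'k \<Rightarrow> complex). invertible P \<and> (\<forall>r. lam r ^ CARD('k) = c) \<and>
           G ** P = P ** (\<chi> r s. if r = s then lam r else 0)"
proof -
  define k where "k = CARD('k)"
  have k0: "k > 0" unfolding k_def by simp
  define R where "R = {z::complex. z ^ k = c}"
  have finR: "finite R" unfolding R_def using k0 by blast
  have cardR: "card R = k" unfolding R_def using card_nth_roots[OF c0 k0] .
  define Pp :: "complex poly" where "Pp = monom 1 k + [:-c:]"
  have polyP: "poly Pp z = z ^ k - c" for z by (simp add: Pp_def poly_monom)
  have degP: "degree Pp = k"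
    unfolding Pp_def using k0 by (subst degree_add_eq_left) (auto simp: degree_monom_eq)
  have pevP: "pev Pp G v = 0" for v
    using H by (simp add: Pp_def pev_add pev_monom pev_const k_def)
  define q where "q z = synthetic_div Pp z" for z
  have Pq: "[:-z, 1:] * q z = Pp" if "z \<in> R" for z
    using synthetic_div_correct'[of z Pp] that polyP by (simp add: q_def R_def)
  have degq: "degree (q z) = k - 1" for z by (simp add: q_def degree_synthetic_div degP)
  have q0: "q z \<noteq> 0" if "z \<in> R" for z
    using Pq[OF that] degP k0 by auto
  have qroot: "poly (q z) w = 0" if "z \<in> R" "w \<in> R" "w \<noteq> z" for z w
  proof -
    have "poly Pp w = (w - z) * poly (q z) w" using Pq[OF that(1)] by (metis poly_mult poly_pCons
        mult_zero_right add.right_neutral mult_1_right mult_cancel_left1 diff_conv_add_uminus add.commute poly_0)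
    then show ?thesis using that polyP by (simp add: R_def)
  qed
  have qnz: "poly (q z) z \<noteq> 0" if "z \<in> R" for z
  proof
    assume "poly (q z) z = 0"
    then have "R \<subseteq> {x. poly (q z) x = 0}" using qroot[OF that] by auto
    then have "card R \<le> card {x. poly (q z) x = 0}"
      using poly_roots_finite[OF q0[OF that]] by (rule card_mono[rotated])
    also have "\<dots> \<le> degree (q z)" by (rule card_poly_roots_bound[OF q0[OF that]])
    finally show False using cardR degq k0 by simp
  qed
  define Q where "Q = (\<Sum>z\<in>R. smult (inverse (poly (q z) z)) (q z))"
  have Q1: "Q = 1"
  proof (rule ccontr)
    assume ne: "Q \<noteq> 1"
    have "degree (Q - 1) \<le> k - 1"
      unfolding Q_def
      by (rule order.trans[OF degree_diff_le_max]) (auto intro!: degree_sum_le finR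
           order.trans[OF degree_smult_le] simp: degq)
    have roots: "R \<subseteq> {x. poly (Q - 1) x = 0}"
    proof
      fix w assume w: "w \<in> R"
      have "poly Q w = (\<Sum>z\<in>R. if z = w then 1 else 0)"
        unfolding Q_def poly_sum
        by (intro sum.cong refl) (use w qroot qnz in auto)
      then show "w \<in> {x. poly (Q - 1) x = 0}" using w finR by simp
    qed
    have "Q - 1 \<noteq> 0" using ne by simp
    then have "card R \<le> card {x. poly (Q - 1) x = 0}"
      using roots poly_roots_finite by (metis card_mono)
    also have "\<dots> \<le> degree (Q - 1)" by (rule card_poly_roots_bound) (use ne in simp)
    finally show False using \<open>degree (Q - 1) \<le> k - 1\<close> cardR k0 by simp
  qed
  define E where "E = {u. \<exists>z\<in>R. G *v u = z *s u}"
  have eigq: "G *v pev (q z) G v = z *s pev (q z) G v" if "z \<in> R" for z v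
  proof -
    have "pev [:-z, 1:] G (pev (q z) G v) = 0" using Pq[OF that] pevP by (metis pev_mult)
    then show ?thesis by (simp add: pev_lin)
  qed
  have spanE: "v \<in> vec.span E" for v
  proof -
    have "v = pev Q G v" by (simp add: Q1 pev_one)
    also have "\<dots> = (\<Sum>z\<in>R. inverse (poly (q z) z) *s pev (q z) G v)"
      by (simp add: Q_def pev_sum pev_smult)
    finally have veq: "v = \<dots>" .
    have "inverse (poly (q z) z) *s pev (q z) G v \<in> E" if "z \<in> R" for z
      using eigq[OF that] that unfolding E_def by (auto simp: mv_scale vec.scale_scale mult.commute)
    then have "(\<Sum>z\<in>R. inverse (poly (q z) z) *s pev (q z) G v) \<in> vec.span E"
      by (intro vec.span_sum) (auto intro: vec.span_base)
    then show ?thesis using veq by simp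
  qed
  obtain Bs where Bs: "Bs \<subseteq> E" "vec.independent Bs" "E \<subseteq> vec.span Bs"
    using vec.maximal_independent_subset[of E] by blast
  have UB: "UNIV \<subseteq> vec.span Bs"
    using spanE Bs(3) by (metis subsetI vec.span_mono vec.span_span subsetD)
  have cardB: "card Bs = k" and finB: "finite Bs"
  proof -
    have "card Bs = vec.dim (UNIV :: (complex^'k) set)"
      using vec.basis_card_eq_dim[of Bs UNIV] Bs UB by simp
    then show "card Bs = k" by (simp only: vec_dim_card k_def)
    show "finite Bs" using Bs(2) vec.independent_bound_general by blast
  qed
  obtain \<beta> :: "'k \<Rightarrow> complex^'k" where \<beta>: "bij_betw \<beta> UNIV Bs"
    using finite_same_card_bij[of "UNIV :: 'k set" Bs] finB cardB k_def by auto
  have \<beta>E: "\<beta> r \<in> E" for r using \<beta> Bs(1) by (auto simp: bij_betw_def)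
  define lam where "lam r = (SOME z. z \<in> R \<and> G *v \<beta> r = z *s \<beta> r)" for r
  have lam: "lam r \<in> R \<and> G *v \<beta> r = lam r *s \<beta> r" for r
    unfolding lam_def using \<beta>E[of r] unfolding E_def by (metis (mono_tags, lifting) someI mem_Collect_eq)
  define P :: "complex^'k^'k" where "P = (\<chi> i r. \<beta> r $ i)"
  have colP: "column r P = \<beta> r" for r by (simp add: P_def column_def vec_eq_iff)
  have indep: "\<forall>c. (\<Sum>r\<in>UNIV. c r *s column r P) = 0 \<longrightarrow> (\<forall>r. c r = 0)"
  proof (intro allI impI)
    fix cc :: "'k \<Rightarrow> complex" and r
    assume "(\<Sum>r\<in>UNIV. cc r *s column r P) = 0"
    then have s0: "(\<Sum>r\<in>UNIV. cc r *s \<beta> r) = 0" by (simp add: colP)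
    define u where "u b = cc (inv_into UNIV \<beta> b)" for b
    have "(\<Sum>b\<in>Bs. u b *s b) = (\<Sum>r\<in>UNIV. u (\<beta> r) *s \<beta> r)"
      using \<beta> by (metis (no_types, lifting) bij_betw_def sum.reindex_cong)
    also have "\<dots> = (\<Sum>r\<in>UNIV. cc r *s \<beta> r)"
      using \<beta> by (simp add: u_def bij_betw_def inv_into_f_f)
    finally have "(\<Sum>b\<in>Bs. u b *s b) = 0" using s0 by simp
    then have "u (\<beta> r) = 0"
      using Bs(2) finB \<beta> vec.independent_explicit_finite_subsets[of Bs]
      by (metis bij_betw_apply UNIV_I order_refl)
    then show "cc r = 0" using \<beta> by (simp add: u_def bij_betw_def inv_into_f_f)
  qed
  have invP: "invertible P"
    using indep matrix_left_invertible_independent_columns[of P] invertible_left_inverse by blast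
  have GP: "G ** P = P ** (\<chi> r s. if r = s then lam r else 0)"
  proof -
    have "(G ** P) $ i $ r = (G *v \<beta> r) $ i" for i r
      by (simp add: matrix_matrix_mult_def matrix_vector_mult_def P_def)
    moreover have "(P ** (\<chi> r s. if r = s then lam r else 0)) $ i $ r = lam r * \<beta> r $ i" for i r
      by (simp add: matrix_matrix_mult_def P_def if_distrib[of "\<lambda>x. _ * x"] cong: if_cong)
    ultimately show ?thesis using lam by (simp add: vec_eq_iff mult.commute)
  qed
  show ?thesis using invP GP lam unfolding R_def k_def by (intro exI[of _ P] exI[of _ lam]) auto
qed



lemma fp_add: "(((*v) (M::complex^'k^'k)) ^^ n) (u + v) = (((*v) M) ^^ n) u + (((*v) M) ^^ n) v"
  by (induction n) (simp_all add: mv_add)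

lemma fp_scale: "(((*v) (M::complex^'k^'k)) ^^ n) (a *s u) = a *s (((*v) M) ^^ n) u"
  by (induction n) (simp_all add: mv_scale)

lemma iter_comm:
  fixes G A :: "complex^'k^'k"
  assumes "\<forall>w. G *v (A *v w) = l *s (A *v (G *v w))"
  shows "(((*v) G) ^^ n) (A *v w) = l ^ n *s (A *v ((((*v) G) ^^ n) w))"
proof (induction n)
  case 0 then show ?case by simp
next
  case (Suc n)
  then show ?case using assms by (simp add: mv_scale vec.scale_scale mult.commute)
qed

lemma iter_D:
  fixes G :: "complex^'k^'k" and D :: "complex^'k^'m" and S :: "complex^'m^'m"
  assumes "\<forall>w. mu *s (D *v (G *v w)) = S *v (D *v w)"
  shows "mu ^ n *s (D *v ((((*v) G) ^^ n) w)) = (((*v) S) ^^ n) (D *v w)"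
proof (induction n)
  case 0 then show ?case by simp
next
  case (Suc n)
  have "mu ^ Suc n *s (D *v ((((*v) G) ^^ Suc n) w)) = mu ^ n *s (mu *s (D *v (G *v ((((*v) G) ^^ n) w))))"
    by (simp add: vec.scale_scale mult.commute)
  also have "\<dots> = mu ^ n *s (S *v (D *v ((((*v) G) ^^ n) w)))" using assms by simp
  also have "\<dots> = S *v (mu ^ n *s (D *v ((((*v) G) ^^ n) w)))" by (simp add: mv_scale)
  finally show ?case using Suc by simp
qed

lemma pow_scalar:
  fixes A B :: "complex^'k^'k" and C :: "complex^2^'k" and D :: "complex^'k^2"
    and H :: "complex^'k \<Rightarrow> complex^'k"
  assumes mon: "nonsingular_monad A B C D"
    and Ha: "\<And>u v. H (u + v) = H u + H v" and Hs: "\<And>a u. H (a *s u) = a *s H u"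
    and HA: "\<And>w. H (A *v w) = A *v H w" and HB: "\<And>w. H (B *v w) = B *v H w"
    and HD: "\<And>w. D *v H w = c *s (D *v w)"
  shows "H w = c *s w"
proof -
  define T where "T w = H w - c *s w" for w
  have Tadd: "T (u + v) = T u + T v" for u v
    by (simp add: T_def Ha vec.scale_right_distrib)
  have Tsc: "T (a *s u) = a *s T u" for a u
    by (simp add: T_def Hs vec.scale_right_diff_distrib vec.scale_scale mult.commute)
  define S where "S = range T"
  have "T 0 = 0" using Tsc[of 0 0] by simp
  then have s0: "0 \<in> S" unfolding S_def by (metis UNIV_I image_eqI)
  have s1: "\<forall>x\<in>S. \<forall>y\<in>S. x + y \<in> S" unfolding S_def by (auto simp flip: Tadd)
  have s2: "\<forall>a. \<forall>x\<in>S. a *s x \<in> S" unfolding S_def by (auto simp flip: Tsc)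
  have subS: "vec.subspace S" unfolding vec.subspace_def using s0 s1 s2 by blast
  have TA: "A *v T w = T (A *v w)" for w by (simp add: T_def mv_diff mv_scale HA)
  have TB: "B *v T w = T (B *v w)" for w by (simp add: T_def mv_diff mv_scale HB)
  have TD: "D *v T w = 0" for w by (simp add: T_def mv_diff mv_scale HD)
  have comm: "A *v (B *v v) = B *v (A *v v)" if "v \<in> S" for v
  proof -
    have "(A ** B - B ** A + C ** D) *v v = 0" using mon by (simp add: nonsingular_monad_def)
    then have "A *v (B *v v) - B *v (A *v v) + C *v (D *v v) = 0"
      by (simp add: matrix_vector_mult_add_rdistrib matrix_vector_mult_diff_rdistrib matrix_vector_mul_assoc)
    moreover have "D *v v = 0" using that TD S_def by auto
    ultimately show ?thesis by simp
  qed
  have "S = {0}"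
  proof (rule ccontr)
    assume ne: "S \<noteq> {0}"
    have invA: "\<forall>v\<in>S. A *v v \<in> S" using TA S_def by auto
    obtain u y where u: "u \<in> S" "u \<noteq> 0" "A *v u = y *s u"
      using eig_in_subspace[OF subS invA ne] by blast
    define S2 where "S2 = {v \<in> S. A *v v = y *s v}"
    have sub2: "vec.subspace S2"
      unfolding vec.subspace_def S2_def using vec.subspace_0[OF subS] vec.subspace_add[OF subS]
        vec.subspace_scale[OF subS]
      by (auto simp: mv_add mv_scale vec.scale_right_distrib vec.scale_scale mult.commute)
    have invB: "\<forall>v\<in>S2. B *v v \<in> S2"
    proof
      fix v assume v: "v \<in> S2"
      then have "B *v v \<in> S" using TB S_def S2_def by auto
      moreover have "A *v (B *v v) = y *s (B *v v)"
        using comm v S2_def by (simp add: mv_scale)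
      ultimately show "B *v v \<in> S2" unfolding S2_def by simp
    qed
    have ne2: "S2 \<noteq> {0}" using u S2_def by auto
    obtain z x where z: "z \<in> S2" "z \<noteq> 0" "B *v z = x *s z"
      using eig_in_subspace[OF sub2 invB ne2] by blast
    have Dz: "D *v z = 0" using z(1) TD S_def S2_def by auto
    have Az: "A *v z = y *s z" using z(1) S2_def by auto
    have "inj (\<lambda>v :: complex^'k. ((A - mat y) *v v, (B - mat x) *v v, D *v v))"
      using mon by (simp add: nonsingular_monad_def)
    moreover have "((A - mat y) *v z, (B - mat x) *v z, D *v z) = ((A - mat y) *v 0, (B - mat x) *v 0, D *v 0)"
      using Az z(3) Dz by (simp add: matrix_vector_mult_diff_rdistrib mat_mv)
    ultimately have "z = 0" by (meson injD)
    then show False using z by simp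
  qed
  then have "T w = 0" unfolding S_def by auto
  then show ?thesis by (simp add: T_def)
qed

lemma expi_pow: "exp (\<i> * complex_of_real t) ^ n = exp (\<i> * complex_of_real (real n * t))"
  by (simp flip: exp_of_nat_mult add: mult_ac)

lemma expmi_pow: "exp (- \<i> * complex_of_real t) ^ n = exp (- \<i> * complex_of_real (real n * t))"
  by (simp flip: exp_of_nat_mult add: mult_ac)

lemma expi_npi: "exp (\<i> * complex_of_real (real n * pi)) = (-1) ^ n"
  using expi_pow[of pi n] by simp

lemma expmi_npi: "exp (- \<i> * complex_of_real (real n * pi)) = (-1) ^ n"
proof -
  have "exp (- \<i> * complex_of_real (real n * pi)) = inverse (exp (\<i> * complex_of_real (real n * pi)))"
    by (simp add: exp_minus[symmetric])
  also have "\<dots> = inverse ((-1) ^ n)" by (simp only: expi_npi)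
  also have "\<dots> = (-1) ^ n" by (simp add: power_inverse[symmetric])
  finally show ?thesis .
qed



lemma cscal_mv: "cscal c M *v v = c *s (M *v (v::complex^'n))"
  by (simp add: vec_eq_iff matrix_vector_mult_def cscal_def sum_distrib_left mult_ac)

lemma sigma_mv: "sigma \<phi> *v u = (\<chi> a. (if a = 1 then exp (- \<i> * of_real (3 * \<phi> / 4)) else exp (- \<i> * of_real (\<phi> / 4))) * u $ a)"
proof -
  have "(\<Sum>b\<in>UNIV. (if a = b then X else 0) * u $ b) = X * u $ a" for a :: 2 and X
    by (simp add: if_distrib[of "\<lambda>x. x * u $ _"] cong: if_cong)
  then show ?thesis by (simp add: vec_eq_iff matrix_vector_mult_def sigma_def)
qed

lemma sigma_pow: "(((*v) (sigma \<phi>)) ^^ n) u = (\<chi> a. (if a = 1 then exp (- \<i> * of_real (3 * \<phi> / 4)) ^ n else exp (- \<i> * of_real (\<phi> / 4)) ^ n) * u $ a)"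
  by (induction n) (simp_all add: vec_eq_iff sigma_mv mult_ac)

lemma inv_facts:
  fixes G :: "complex^'k^'k"
  assumes "invertible G"
  shows "G ** matrix_inv G = mat 1 \<and> matrix_inv G ** G = mat 1"
  using assms unfolding invertible_def matrix_inv_def by (rule someI_ex)

theorem mainTheorem7:
  fixes A B G :: "complex^'k^'k" and C :: "complex^2^'k" and D :: "complex^'k^2"
    and j :: int
  assumes "0 \<le> j" and "j < 2 * int CARD('k)" and "even j"
    and "nonsingular_monad A B C D"
    and "symm_witness j G A B C D"
  shows "\<exists>(h :: complex^'k^'k) (x :: 'k \<Rightarrow> complex).
           invertible h \<and> (\<forall>r. x r ^ CARD('k) = 1) \<and>
           h ** G ** matrix_inv h =
             (\<chi> r s. if r = s then Omega j CARD('k) * x r else 0)"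
proof -
  define K where "K = CARD('k)"
  have K0: "real K > 0" unfolding K_def by simp
  obtain b where jb: "j = 2 * b" using assms(3) by (metis evenE)
  define m where "m = nat b"
  have jm: "real_of_int j = 2 * real m" using jb assms(1) m_def by simp
  define \<phi> where "\<phi> = 2 * real_of_int j * pi / real K"
  define lA where "lA = exp (\<i> * of_real (2 * real_of_int j * pi / real K))"
  define lB where "lB = exp (\<i> * of_real (2 * pi / real K))"
  define mu where "mu = exp (\<i> * of_real (pi / real K))"
  have invG: "invertible G"
    and eA: "cscal lA A = G ** A ** matrix_inv G"
    and eB: "cscal lB B = G ** B ** matrix_inv G"
    and eD: "cscal mu D = sigma \<phi> ** D ** matrix_inv G"
    using assms(5) unfolding symm_witness_def Let_def lA_def lB_def mu_def \<phi>_def K_def by auto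
  define Gi where "Gi = matrix_inv G"
  have GiG: "Gi ** G = mat 1" using inv_facts[OF invG] Gi_def by simp
  have gback: "Gi *v (G *v w) = w" for w by (simp add: matrix_vector_mul_assoc GiG)
  have hA: "\<forall>w. G *v (A *v w) = lA *s (A *v (G *v w))"
  proof
    fix w
    have "lA *s (A *v (G *v w)) = (G ** A ** Gi) *v (G *v w)" by (simp add: cscal_mv[symmetric] eA Gi_def)
    also have "\<dots> = G *v (A *v w)" by (simp add: matrix_vector_mul_assoc[symmetric] gback)
    finally show "G *v (A *v w) = lA *s (A *v (G *v w))" by simp
  qed
  have hB: "\<forall>w. G *v (B *v w) = lB *s (B *v (G *v w))"
  proof
    fix w
    have "lB *s (B *v (G *v w)) = (G ** B ** Gi) *v (G *v w)" by (simp add: cscal_mv[symmetric] eB Gi_def)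
    also have "\<dots> = G *v (B *v w)" by (simp add: matrix_vector_mul_assoc[symmetric] gback)
    finally show "G *v (B *v w) = lB *s (B *v (G *v w))" by simp
  qed
  have hD: "\<forall>w. mu *s (D *v (G *v w)) = sigma \<phi> *v (D *v w)"
  proof
    fix w
    have "mu *s (D *v (G *v w)) = (sigma \<phi> ** D ** Gi) *v (G *v w)" by (simp add: cscal_mv[symmetric] eD Gi_def)
    also have "\<dots> = sigma \<phi> *v (D *v w)" by (simp add: matrix_vector_mul_assoc[symmetric] gback)
    finally show "mu *s (D *v (G *v w)) = sigma \<phi> *v (D *v w)" .
  qed
  have lAK: "lA ^ K = 1"
  proof -
    have "real K * (2 * real_of_int j * pi / real K) = real (4 * m) * pi" using K0 jm by simp
    then have "lA ^ K = (-1) ^ (4 * m)" unfolding lA_def expi_pow by (simp only: expi_npi)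
    then show ?thesis by (simp add: power_mult)
  qed
  have lBK: "lB ^ K = 1"
  proof -
    have "real K * (2 * pi / real K) = real 2 * pi" using K0 by simp
    then have "lB ^ K = (-1) ^ 2" unfolding lB_def expi_pow by (simp only: expi_npi)
    then show ?thesis by simp
  qed
  have muK: "mu ^ K = -1"
  proof -
    have "real K * (pi / real K) = real 1 * pi" using K0 by simp
    then have "mu ^ K = (-1) ^ 1" unfolding mu_def expi_pow by (simp only: expi_npi)
    then show ?thesis by simp
  qed
  have s1K: "exp (- \<i> * of_real (3 * \<phi> / 4)) ^ K = (-1) ^ m"
  proof -
    have "real K * (3 * \<phi> / 4) = real (3 * m) * pi" using K0 jm by (simp add: \<phi>_def)
    then have "exp (- \<i> * of_real (3 * \<phi> / 4)) ^ K = (-1) ^ (3 * m)" unfolding expmi_pow by (simp only: expmi_npi)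
    then show ?thesis by (simp add: power_mult)
  qed
  have s2K: "exp (- \<i> * of_real (\<phi> / 4)) ^ K = (-1) ^ m"
  proof -
    have "real K * (\<phi> / 4) = real m * pi" using K0 jm by (simp add: \<phi>_def)
    then show ?thesis unfolding expmi_pow by (simp only: expmi_npi)
  qed
  define Om where "Om = Omega j K"
  have OmK: "Om ^ K = - ((-1) ^ m)"
  proof -
    have "real K * ((2 - real_of_int j) * pi / (2 * real K)) = pi - real m * pi" using K0 jm
      by (simp add: field_simps)
    then have "Om ^ K = exp (\<i> * of_real (pi - real m * pi))"
      unfolding Om_def Omega_def expi_pow by simp
    also have "\<dots> = exp (\<i> * of_real pi + (- \<i> * of_real (real m * pi)))"
      by (simp add: algebra_simps)
    also have "\<dots> = - ((-1) ^ m)" by (simp only: exp_add expmi_npi exp_pi_i') simp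
    finally show ?thesis .
  qed
  have Om0: "Om \<noteq> 0" unfolding Om_def Omega_def by simp
  define c where "c = Om ^ K"
  have c0: "c \<noteq> 0" using Om0 c_def by simp
  define H where "H = ((*v) G) ^^ K"
  have HD: "D *v H w = c *s (D *v w)" for w
  proof -
    have "mu ^ K *s (D *v H w) = (((*v) (sigma \<phi>)) ^^ K) (D *v w)"
      unfolding H_def by (rule iter_D[OF hD])
    also have "\<dots> = (-1) ^ m *s (D *v w)"
      by (simp only: sigma_pow s1K s2K if_cancel) (simp add: vec_eq_iff)
    finally have "- (D *v H w) = (-1) ^ m *s (D *v w)" using muK by simp
    then have "D *v H w = - ((-1) ^ m *s (D *v w))" by (metis minus_minus)
    then show ?thesis by (simp add: c_def OmK vec.scale_minus_left)
  qed
  have Hall: "\<forall>w. H w = c *s w"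
  proof
    fix w
    show "H w = c *s w"
    proof (rule pow_scalar[OF assms(4)])
      show "H (u + v) = H u + H v" for u v unfolding H_def by (rule fp_add)
      show "H (a *s u) = a *s H u" for a u unfolding H_def by (rule fp_scale)
      show "H (A *v w) = A *v H w" for w unfolding H_def using iter_comm[OF hA] lAK by simp
      show "H (B *v w) = B *v H w" for w unfolding H_def using iter_comm[OF hB] lBK by simp
      show "D *v H w = c *s (D *v w)" for w by (rule HD)
    qed
  qed
  obtain P :: "complex^'k^'k" and lam :: "'k \<Rightarrow> complex" where P: "invertible P" "\<forall>r. lam r ^ CARD('k) = c"
      "G ** P = P ** (\<chi> r s. if r = s then lam r else 0)"
  proof -
    have HallG: "\<forall>v. (((*v) G) ^^ CARD('k)) v = c *s v" using Hall unfolding H_def K_def .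
    show ?thesis using diag_from_pow[OF c0 HallG] that by blast
  qed
  define h where "h = matrix_inv P"
  have Ph: "P ** h = mat 1" "h ** P = mat 1" using inv_facts[OF P(1)] h_def by auto
  have invh: "invertible h" using Ph unfolding invertible_def by blast
  have "h ** matrix_inv h = mat 1 \<and> matrix_inv h ** h = mat 1" by (rule inv_facts[OF invh])
  then have ih: "matrix_inv h = P"
    by (metis Ph(1) matrix_mul_assoc matrix_mul_lid matrix_mul_rid)
  define x where "x r = lam r / Om" for r
  have "h ** G ** matrix_inv h = h ** (G ** P)" by (simp add: ih matrix_mul_assoc)
  also have "\<dots> = (\<chi> r s. if r = s then lam r else 0)"
    by (simp add: P(3) matrix_mul_assoc Ph(2))
  also have "\<dots> = (\<chi> r s. if r = s then Omega j CARD('k) * x r else 0)"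
  proof -
    have "Omega j CARD('k) * x r = lam r" for r using Om0 by (simp add: x_def Om_def K_def)
    then show ?thesis by (simp cong: if_cong)
  qed
  finally have fin: "h ** G ** matrix_inv h = (\<chi> r s. if r = s then Omega j CARD('k) * x r else 0)" .
  have "x r ^ CARD('k) = 1" for r
    using P(2) Om0 by (simp add: x_def power_divide c_def K_def)
  then show ?thesis using invh fin by blast
qed

end
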